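(* Let $G=(m,n,\boldsymbol{c},\boldsymbol{d},r_{\max},r_{\min})$ be an interbank lending game, let $g(\boldsymbol{s})=(\nabla_1u_1(\boldsymbol{s}),\dots,\nabla_mu_m(\boldsymbol{s}))\in\mathbb{R}^{mn}$ be its $\boldsymbol{1}$-pseudo-gradient, and let $\nabla g(\boldsymbol{s})$ be the $mn\times mn$ Jacobian matrix of $g$ at $\boldsymbol{s}$. Then for every strategy profile $\boldsymbol{s}$, the matrix $\nabla g(\boldsymbol{s})+(\nabla g(\boldsymbol{s}))^\top$ is negative definite.
   Context: An interbank lending game $G=(m,n,\boldsymbol{c},\boldsymbol{d},r_{\max},r_{\min})$ consists of positive integers $m,n$, budgets $\boldsymbol{c}\in\mathbb{R}_{>0}^m$, demands $\boldsymbol{d}\in\mathbb{R}_{>0}^n$ and reals $0<r_{\min}<r_{\max}$. Lenders are $L=\{1,\dots,m\}$, borrowers $B=\{1,\dots,n\}$. Lender $i$'s strategy set is $S_i=\{s_i\in\mathbb{R}_{\ge0}^n:\sum_{j\in B}s_{ij}\le c_i\}$, the strategy space is $\boldsymbol{S}=\prod_{i\in L}S_i$ with elements $\boldsymbol{s}=(s_{ij})_{i\in L,j\in B}$, $s_i=(s_{i1},\dots,s_{in})$. The interest rate of borrower $j$ is $r_j(\boldsymbol{s})=(r_{\min}-r_{\max})\frac{\sum_{i\in L}s_{ij}}{d_j}+r_{\max}$ and lender $i$'s utility is $u_i(\boldsymbol{s})=\sum_{j\in B}(r_j(\boldsymbol{s})-r_{\min})s_{ij}$ (a polynomial in $\boldsymbol{s}$).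 $\nabla_iu_i(\boldsymbol{s})\in\mathbb{R}^n$ denotes the gradient of $u_i$ with respect to lender $i$'s own variables $s_i$. *)

theory Defs
  imports "HOL-Analysis.Analysis"
begin

text \<open>Lenders are indexed by 1..m, borrowers by 1..n. A strategy profile is a
function s :: nat => nat => real, with s i j the amount lender i lends to borrower j.\<close>

definition interbank_game ::
  "nat \<Rightarrow> nat \<Rightarrow> (nat \<Rightarrow> real) \<Rightarrow> (nat \<Rightarrow> real) \<Rightarrow> real \<Rightarrow> real \<Rightarrow> bool" where
  "interbank_game m n c d rmax rmin \<longleftrightarrow>
     0 < m \<and> 0 < n \<and> (\<forall>i\<in>{1..m}. 0 < c i) \<and> (\<forall>j\<in>{1..n}. 0 < d j)
     \<and> 0 < rmin \<and> rmin < rmax"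

definition strategy_space ::
  "nat \<Rightarrow> nat \<Rightarrow> (nat \<Rightarrow> real) \<Rightarrow> (nat \<Rightarrow> nat \<Rightarrow> real) set" where
  "strategy_space m n c =
     {s. \<forall>i\<in>{1..m}. (\<forall>j\<in>{1..n}. 0 \<le> s i j) \<and> (\<Sum>j=1..n. s i j) \<le> c i}"

definition interest_rate ::
  "nat \<Rightarrow> (nat \<Rightarrow> real) \<Rightarrow> real \<Rightarrow> real \<Rightarrow> (nat \<Rightarrow> nat \<Rightarrow> real) \<Rightarrow> nat \<Rightarrow> real" where
  "interest_rate m d rmax rmin s j = (rmin - rmax) * (\<Sum>i=1..m. s i j) / d j + rmax"

definition utility ::
  "nat \<Rightarrow> nat \<Rightarrow> (nat \<Rightarrow> real) \<Rightarrow> real \<Rightarrow> real \<Rightarrow> (nat \<Rightarrow> nat \<Rightarrow> real) \<Rightarrow> nat \<Rightarrow> real" where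
  "utility m n d rmax rmin s i = (\<Sum>j=1..n. (interest_rate m d rmax rmin s j - rmin) * s i j)"

definition upd_profile :: "(nat \<Rightarrow> nat \<Rightarrow> real) \<Rightarrow> nat \<Rightarrow> nat \<Rightarrow> real \<Rightarrow> (nat \<Rightarrow> nat \<Rightarrow> real)" where
  "upd_profile s k l t = s(k := (s k)(l := t))"

definition pseudo_gradient ::
  "nat \<Rightarrow> nat \<Rightarrow> (nat \<Rightarrow> real) \<Rightarrow> real \<Rightarrow> real \<Rightarrow> (nat \<Rightarrow> nat \<Rightarrow> real) \<Rightarrow> nat \<times> nat \<Rightarrow> real" where
  "pseudo_gradient m n d rmax rmin s p =
     (case p of (i, j) \<Rightarrow> deriv (\<lambda>t. utility m n d rmax rmin (upd_profile s i j t) i) (s i j))"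

definition pg_jacobian ::
  "nat \<Rightarrow> nat \<Rightarrow> (nat \<Rightarrow> real) \<Rightarrow> real \<Rightarrow> real \<Rightarrow> (nat \<Rightarrow> nat \<Rightarrow> real) \<Rightarrow> nat \<times> nat \<Rightarrow> nat \<times> nat \<Rightarrow> real" where
  "pg_jacobian m n d rmax rmin s p q =
     (case q of (k, l) \<Rightarrow> deriv (\<lambda>t. pseudo_gradient m n d rmax rmin (upd_profile s k l t) p) (s k l))"

definition negative_definite :: "'a set \<Rightarrow> ('a \<Rightarrow> 'a \<Rightarrow> real) \<Rightarrow> bool" where
  "negative_definite I M \<longleftrightarrow>
     (\<forall>x. (\<exists>p\<in>I. x p \<noteq> 0) \<longrightarrow> (\<Sum>p\<in>I. \<Sum>q\<in>I. x p * M p q * x q) < 0)"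

end

theory Submission
  imports Defs
begin

lemma colsum_upd:
  "(\<Sum>i'=1..m. upd_profile s i j t i' j') = (\<Sum>i'=1..m. s i' j') + (if j' = j \<and> i \<in> {1..m} then t - s i j else 0)"
proof -
  have "(\<Sum>i'=1..m. upd_profile s i j t i' j') = (\<Sum>i'=1..m. s i' j' + (if i' = i then (if j' = j then t - s i j else 0) else 0))"
    by (rule sum.cong) (auto simp: upd_profile_def)
  also have "\<dots> = (\<Sum>i'=1..m. s i' j') + (if j' = j \<and> i \<in> {1..m} then t - s i j else 0)"
    by (simp add: sum.distrib sum.delta)
  finally show ?thesis .
qed

lemma upd_entry: "upd_profile s k l t i j = s i j + (if k = i \<and> l = j then t - s k l else 0)"
  by (auto simp: upd_profile_def)

lemma utility_upd:
  assumes "j \<in> {1..n}"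
  shows "utility m n d rmax rmin (upd_profile s i j t) i =
     (\<Sum>j'\<in>{1..n}-{j}. (interest_rate m d rmax rmin s j' - rmin) * s i j')
     + (rmax - rmin) * (1 - ((\<Sum>i'=1..m. s i' j) - (if i \<in> {1..m} then s i j else 0) + (if i \<in> {1..m} then t else 0)) / d j) * t"
proof -
  have "utility m n d rmax rmin (upd_profile s i j t) i =
     (interest_rate m d rmax rmin (upd_profile s i j t) j - rmin) * upd_profile s i j t i j
     + (\<Sum>j'\<in>{1..n}-{j}. (interest_rate m d rmax rmin (upd_profile s i j t) j' - rmin) * upd_profile s i j t i j')"
    unfolding utility_def using assms by (simp add: sum.remove)
  also have "(\<Sum>j'\<in>{1..n}-{j}. (interest_rate m d rmax rmin (upd_profile s i j t) j' - rmin) * upd_profile s i j t i j')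
     = (\<Sum>j'\<in>{1..n}-{j}. (interest_rate m d rmax rmin s j' - rmin) * s i j')"
    by (rule sum.cong) (auto simp: interest_rate_def colsum_upd upd_entry)
  also have "(interest_rate m d rmax rmin (upd_profile s i j t) j - rmin) * upd_profile s i j t i j
     = (rmax - rmin) * (1 - ((\<Sum>i'=1..m. s i' j) - (if i \<in> {1..m} then s i j else 0) + (if i \<in> {1..m} then t else 0)) / d j) * t"
    unfolding interest_rate_def colsum_upd
    by (cases "d j = 0"; cases "i \<in> {1..m}") (auto simp: upd_entry field_simps)
  finally show ?thesis by simp
qed

lemma pg_closed:
  assumes "i \<in> {1..m}" "j \<in> {1..n}" "d j \<noteq> 0"
  shows "pseudo_gradient m n d rmax rmin s (i, j) =
    (rmax - rmin) * (1 - (\<Sum>i'=1..m. s i' j) / d j) - (rmax - rmin) * s i j / d j"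
proof -
  define K where "K = (\<Sum>j'\<in>{1..n}-{j}. (interest_rate m d rmax rmin s j' - rmin) * s i j')"
  define S where "S = (\<Sum>i'=1..m. s i' j)"
  have f: "(\<lambda>t. utility m n d rmax rmin (upd_profile s i j t) i) =
     (\<lambda>t. K + (rmax - rmin) * (1 - (S - s i j + t) / d j) * t)"
    using assms(1) by (simp add: utility_upd[OF assms(2)] K_def S_def)
  have "((\<lambda>t. K + (rmax - rmin) * (1 - (S - s i j + t) / d j) * t) has_field_derivative
     (rmax - rmin) * (1 - S / d j) - (rmax - rmin) * s i j / d j) (at (s i j))"
    using assms(3) by (auto intro!: derivative_eq_intros simp: field_simps)
  then have "deriv (\<lambda>t. utility m n d rmax rmin (upd_profile s i j t) i) (s i j) =
     (rmax - rmin) * (1 - S / d j) - (rmax - rmin) * s i j / d j"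
    unfolding f by (rule DERIV_imp_deriv)
  then show ?thesis by (simp add: pseudo_gradient_def S_def)
qed

lemma jac_closed:
  assumes "i \<in> {1..m}" "j \<in> {1..n}" "k \<in> {1..m}" "l \<in> {1..n}" "d j \<noteq> 0" "d l \<noteq> 0"
  shows "pg_jacobian m n d rmax rmin s (i, j) (k, l) =
    - ((rmax - rmin) / d j) * ((if l = j then 1 else 0) + (if k = i \<and> l = j then 1 else 0))"
proof -
  define Q where "Q = - ((rmax - rmin) / d j) * ((if l = j then 1 else 0) + (if k = i \<and> l = j then 1 else 0))"
  define f0 where "f0 = (rmax - rmin) * (1 - (\<Sum>i'=1..m. s i' j) / d j) - (rmax - rmin) * s i j / d j"
  have f: "(\<lambda>t. pseudo_gradient m n d rmax rmin (upd_profile s k l t) (i, j)) =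
     (\<lambda>t. f0 + Q * (t - s k l))"
  proof
    fix t
    show "pseudo_gradient m n d rmax rmin (upd_profile s k l t) (i, j) = f0 + Q * (t - s k l)"
      unfolding pg_closed[of i m j n d rmax rmin "upd_profile s k l t", OF assms(1,2,5)] colsum_upd
      unfolding upd_entry f0_def Q_def
      using assms by (auto simp: field_simps)
  qed
  have "((\<lambda>t. f0 + Q * (t - s k l)) has_field_derivative Q) (at (s k l))"
    by (auto intro!: derivative_eq_intros)
  then have "deriv (\<lambda>t. pseudo_gradient m n d rmax rmin (upd_profile s k l t) (i, j)) (s k l) = Q"
    unfolding f by (rule DERIV_imp_deriv)
  then show ?thesis by (simp add: pg_jacobian_def Q_def)
qed

theorem proposition4p7:
  fixes m n :: nat and c d :: "nat \<Rightarrow> real" and rmax rmin :: real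
    and s :: "nat \<Rightarrow> nat \<Rightarrow> real"
  assumes "interbank_game m n c d rmax rmin"
    and "s \<in> strategy_space m n c"
  shows "negative_definite ({1..m} \<times> {1..n})
           (\<lambda>p q. pg_jacobian m n d rmax rmin s p q + pg_jacobian m n d rmax rmin s q p)"
  unfolding negative_definite_def
proof (intro allI impI)
  fix x :: "nat \<times> nat \<Rightarrow> real"
  assume ex: "\<exists>p\<in>{1..m} \<times> {1..n}. x p \<noteq> 0"
  define I where "I = {1..m}"
  define J where "J = {1..n}"
  define a where "a = rmax - rmin"
  have a: "a > 0" using assms(1) by (simp add: interbank_game_def a_def)
  have dpos: "\<And>j. j \<in> J \<Longrightarrow> d j > 0" using assms(1) by (simp add: interbank_game_def J_def)
  define T where "T j = (\<Sum>k\<in>I. x (k, j))" for j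
  have M: "pg_jacobian m n d rmax rmin s (i, j) (k, l) + pg_jacobian m n d rmax rmin s (k, l) (i, j)
     = - (2 * a / d j) * (if l = j then 1 + (if k = i then 1 else 0) else 0)"
    if "i \<in> I" "j \<in> J" "k \<in> I" "l \<in> J" for i j k l
    using that dpos[OF that(2)] dpos[OF that(4)]
    by (simp add: jac_closed I_def J_def a_def field_simps)
  have inner: "(\<Sum>q\<in>I \<times> J. x (i, j) * (pg_jacobian m n d rmax rmin s (i, j) q + pg_jacobian m n d rmax rmin s q (i, j)) * x q)
      = - (2 * a / d j) * x (i, j) * (T j + x (i, j))"
    if "i \<in> I" "j \<in> J" for i j
  proof -
    have "(\<Sum>q\<in>I \<times> J. x (i, j) * (pg_jacobian m n d rmax rmin s (i, j) q + pg_jacobian m n d rmax rmin s q (i, j)) * x q)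
        = (\<Sum>k\<in>I. \<Sum>l\<in>J. (if l = j then x (i, j) * (- (2 * a / d j) * (1 + (if k = i then 1 else 0))) * x (k, l) else 0))"
      unfolding sum.cartesian_product
      by (intro sum.cong refl) (auto simp: M that)
    also have "\<dots> = (\<Sum>k\<in>I. x (i, j) * (- (2 * a / d j) * (1 + (if k = i then 1 else 0))) * x (k, j))"
      using that by (simp add: sum.delta' J_def)
    also have "\<dots> = (\<Sum>k\<in>I. - (2 * a / d j) * x (i, j) * x (k, j) + (if k = i then - (2 * a / d j) * x (i, j) * x (k, j) else 0))"
      by (intro sum.cong refl) (simp add: algebra_simps)
    also have "\<dots> = (\<Sum>k\<in>I. - (2 * a / d j) * x (i, j) * x (k, j)) + (\<Sum>k\<in>I. if k = i then - (2 * a / d j) * x (i, j) * x (k, j) else 0)"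
      by (rule sum.distrib)
    also have "\<dots> = - (2 * a / d j) * x (i, j) * T j + - (2 * a / d j) * x (i, j) * x (i, j)"
      using that by (simp add: T_def sum_distrib_left I_def)
    also have "\<dots> = - (2 * a / d j) * x (i, j) * (T j + x (i, j))"
      by (simp add: algebra_simps add_divide_distrib)
    finally show ?thesis .
  qed
  have "(\<Sum>p\<in>I \<times> J. \<Sum>q\<in>I \<times> J. x p * (pg_jacobian m n d rmax rmin s p q + pg_jacobian m n d rmax rmin s q p) * x q)
      = (\<Sum>p\<in>I \<times> J. - (2 * a / d (snd p)) * x p * (T (snd p) + x p))"
    by (intro sum.cong refl) (auto simp: inner)
  also have "\<dots> = (\<Sum>i\<in>I. \<Sum>j\<in>J. - (2 * a / d j) * (x (i, j) * T j + x (i, j)^2))"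
    unfolding sum.cartesian_product
    by (intro sum.cong refl) (auto simp: algebra_simps power2_eq_square add_divide_distrib)
  also have "\<dots> = (\<Sum>j\<in>J. \<Sum>i\<in>I. - (2 * a / d j) * (x (i, j) * T j + x (i, j)^2))"
    by (rule sum.swap)
  also have "\<dots> = (\<Sum>j\<in>J. - (2 * a) * ((T j ^ 2 + (\<Sum>i\<in>I. x (i, j)^2)) / d j))"
  proof (rule sum.cong[OF refl])
    fix j assume "j \<in> J"
    have e1: "(\<Sum>i\<in>I. x (i, j) * T j + x (i, j)^2) = T j ^ 2 + (\<Sum>i\<in>I. x (i, j)^2)"
      by (simp add: sum.distrib T_def sum_distrib_right power2_eq_square)
    have "(\<Sum>i\<in>I. - (2 * a / d j) * (x (i, j) * T j + x (i, j)^2))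
        = - (2 * a / d j) * (\<Sum>i\<in>I. x (i, j) * T j + x (i, j)^2)"
      by (rule sum_distrib_left[symmetric])
    then show "(\<Sum>i\<in>I. - (2 * a / d j) * (x (i, j) * T j + x (i, j)^2))
        = - (2 * a) * ((T j ^ 2 + (\<Sum>i\<in>I. x (i, j)^2)) / d j)"
      unfolding e1 by simp
  qed
  also have "\<dots> = - (2 * a) * (\<Sum>j\<in>J. (T j ^ 2 + (\<Sum>i\<in>I. x (i, j)^2)) / d j)"
    by (rule sum_distrib_left[symmetric])
  also have "\<dots> < 0"
  proof -
    obtain i0 j0 where p0: "i0 \<in> I" "j0 \<in> J" "x (i0, j0) \<noteq> 0" using ex by (auto simp: I_def J_def)
    have "0 < x (i0, j0)^2 / d j0" using p0 dpos[OF p0(2)] by simp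
    also have "\<dots> \<le> (\<Sum>i\<in>I. x (i, j0)^2) / d j0"
      using p0 dpos[OF p0(2)] by (intro divide_right_mono member_le_sum) (auto simp: I_def)
    also have "\<dots> \<le> (T j0 ^ 2 + (\<Sum>i\<in>I. x (i, j0)^2)) / d j0"
      using dpos[OF p0(2)] by (intro divide_right_mono) auto
    also have "\<dots> \<le> (\<Sum>j\<in>J. (T j ^ 2 + (\<Sum>i\<in>I. x (i, j)^2)) / d j)"
      using p0 dpos by (intro member_le_sum) (auto simp: J_def intro!: divide_nonneg_pos add_nonneg_nonneg sum_nonneg)
    finally show ?thesis using a by (simp add: mult_pos_pos)
  qed
  finally show "(\<Sum>p\<in>{1..m} \<times> {1..n}. \<Sum>q\<in>{1..m} \<times> {1..n}. x p * (pg_jacobian m n d rmax rmin s p q + pg_jacobian m n d rmax rmin s q p) * x q) < 0"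
    unfolding I_def J_def .
qed

end
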